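(* For any valued field $K$ the following are equivalent: (1) for every $d\ge 1$, every set $X\subseteq K^d$ that is closed under 2-element convex combinations (i.e. $\alpha x+\beta y\in X$ whenever $x,y\in X$, $\alpha,\beta\in\mathcal{O}$, $\alpha+\beta=1$) is convex; (2) the residue field $k$ is not isomorphic to $\mathbb{F}_2$.
   Context: $K$ is a field with a valuation $\nu:K\to\Gamma\cup\{\infty\}$, valuation ring $\mathcal{O}=\{x:\nu(x)\ge 0\}$, maximal ideal $\mathfrak{m}=\{x:\nu(x)>0\}$ and residue field $k=\mathcal{O}/\mathfrak{m}$. A set $X\subseteq K^d$ is convex if for every $n\ge 1$, all $x_1,\dots,x_n\in X$ and all $\alpha_1,\dots,\alpha_n\in\mathcal{O}$ with $\alpha_1+\dots+\alpha_n=1$, we have $\alpha_1x_1+\dots+\alpha_nx_n\in X$. *)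

theory Defs
  imports Main "HOL-Algebra.QuotRing" "HOL-Number_Theory.Residues"
begin

text \<open>The value at 0 is \<infinity>; we record the valuation only on nonzero elements,
  so that \<nu>(0) = \<infinity> is implicit: the axioms are \<nu>(xy) = \<nu>x + \<nu>y and
  \<nu>(x+y) \<ge> min(\<nu>x, \<nu>y), read with the convention \<nu>(0) = \<infinity>.\<close>
definition valuation :: "('a::field \<Rightarrow> 'g::linordered_ab_group_add) \<Rightarrow> bool" where
  "valuation \<nu> \<longleftrightarrow>
     (\<forall>x y. x \<noteq> 0 \<longrightarrow> y \<noteq> 0 \<longrightarrow> \<nu> (x * y) = \<nu> x + \<nu> y) \<and>
     (\<forall>x y. x \<noteq> 0 \<longrightarrow> y \<noteq> 0 \<longrightarrow> x + y \<noteq> 0 \<longrightarrow> min (\<nu> x) (\<nu> y) \<le> \<nu> (x + y))"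

definition val_ring :: "('a::field \<Rightarrow> 'g::linordered_ab_group_add) \<Rightarrow> 'a set" where
  "val_ring \<nu> = {x. x = 0 \<or> 0 \<le> \<nu> x}"

definition val_max_ideal :: "('a::field \<Rightarrow> 'g::linordered_ab_group_add) \<Rightarrow> 'a set" where
  "val_max_ideal \<nu> = {x. x = 0 \<or> 0 < \<nu> x}"

definition val_ring_alg :: "('a::field \<Rightarrow> 'g::linordered_ab_group_add) \<Rightarrow> 'a ring" where
  "val_ring_alg \<nu> = \<lparr>carrier = val_ring \<nu>, monoid.mult = (*), one = 1, zero = 0, add = (+)\<rparr>"

definition residue_field :: "('a::field \<Rightarrow> 'g::linordered_ab_group_add) \<Rightarrow> 'a set ring" where
  "residue_field \<nu> = val_ring_alg \<nu> Quot val_max_ideal \<nu>"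

definition Kpow :: "nat \<Rightarrow> (nat \<Rightarrow> 'a::field) set" where
  "Kpow d = {x. \<forall>i\<ge>d. x i = 0}"

definition convex_val :: "('a::field \<Rightarrow> 'g::linordered_ab_group_add) \<Rightarrow> (nat \<Rightarrow> 'a) set \<Rightarrow> bool" where
  "convex_val \<nu> X \<longleftrightarrow>
     (\<forall>n::nat. \<forall>x::nat \<Rightarrow> nat \<Rightarrow> 'a. \<forall>\<alpha>::nat \<Rightarrow> 'a.
        n \<ge> 1 \<longrightarrow> (\<forall>j<n. x j \<in> X \<and> \<alpha> j \<in> val_ring \<nu>) \<longrightarrow> (\<Sum>j<n. \<alpha> j) = 1 \<longrightarrow>
        (\<lambda>i. \<Sum>j<n. \<alpha> j * x j i) \<in> X)"

definition convex2_val :: "('a::field \<Rightarrow> 'g::linordered_ab_group_add) \<Rightarrow> (nat \<Rightarrow> 'a) set \<Rightarrow> bool" where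
  "convex2_val \<nu> X \<longleftrightarrow>
     (\<forall>x\<in>X. \<forall>y\<in>X. \<forall>a\<in>val_ring \<nu>. \<forall>b\<in>val_ring \<nu>. a + b = 1 \<longrightarrow>
        (\<lambda>i. a * x i + b * y i) \<in> X)"

end

theory Submission imports Defs begin

context
  fixes \<nu> :: "'a::field \<Rightarrow> 'g::linordered_ab_group_add"
  assumes v: "valuation \<nu>"
begin

lemma vmult: "x \<noteq> 0 \<Longrightarrow> y \<noteq> 0 \<Longrightarrow> \<nu> (x*y) = \<nu> x + \<nu> y"
  using v unfolding valuation_def by blast
lemma vadd: "x \<noteq> 0 \<Longrightarrow> y \<noteq> 0 \<Longrightarrow> x + y \<noteq> 0 \<Longrightarrow> min (\<nu> x) (\<nu> y) \<le> \<nu> (x+y)"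
  using v unfolding valuation_def by blast
lemma v1: "\<nu> 1 = 0"
  using vmult[of 1 1] by simp
lemma vm1: "\<nu> (-1) = 0"
proof -
  have "\<nu> (-1) + \<nu> (-1) = 0" using vmult[of "-1" "-1"] v1 by simp
  then show ?thesis by simp
qed
lemma vneg: "x \<noteq> 0 \<Longrightarrow> \<nu> (-x) = \<nu> x"
  using vmult[of "-1" x] vm1 by simp
lemma vinv: "x \<noteq> 0 \<Longrightarrow> \<nu> (inverse x) = - \<nu> x"
  using vmult[of x "inverse x"] v1 by (simp add: eq_neg_iff_add_eq_0 add.commute)

abbreviation "VR \<equiv> val_ring \<nu>"
abbreviation "VM \<equiv> val_max_ideal \<nu>"

lemma O_0[simp]: "0 \<in> VR" and O_1[simp]: "1 \<in> VR" and M_0[simp]: "0 \<in> VM"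
  by (auto simp: val_ring_def val_max_ideal_def v1)
lemma one_notin_M[simp]: "1 \<notin> VM"
  by (auto simp: val_max_ideal_def v1)
lemma M_O: "x \<in> VM \<Longrightarrow> x \<in> VR"
  by (auto simp: val_ring_def val_max_ideal_def)
lemma O_add: "x \<in> VR \<Longrightarrow> y \<in> VR \<Longrightarrow> x + y \<in> VR"
  unfolding val_ring_def using vadd[of x y]
  by (cases "x = 0"; cases "y = 0"; cases "x + y = 0"; auto simp: min_def split: if_splits)
lemma M_add: "x \<in> VM \<Longrightarrow> y \<in> VM \<Longrightarrow> x + y \<in> VM"
  unfolding val_max_ideal_def using vadd[of x y]
  by (cases "x = 0"; cases "y = 0"; cases "x + y = 0"; auto simp: min_def split: if_splits)
lemma O_uminus: "x \<in> VR \<Longrightarrow> -x \<in> VR"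
  unfolding val_ring_def using vneg[of x] by (cases "x = 0") auto
lemma M_uminus: "x \<in> VM \<Longrightarrow> -x \<in> VM"
  unfolding val_max_ideal_def using vneg[of x] by (cases "x = 0") auto
lemma O_diff: "x \<in> VR \<Longrightarrow> y \<in> VR \<Longrightarrow> x - y \<in> VR"
  using O_add O_uminus by (metis diff_conv_add_uminus)
lemma M_diff: "x \<in> VM \<Longrightarrow> y \<in> VM \<Longrightarrow> x - y \<in> VM"
  using M_add M_uminus by (metis diff_conv_add_uminus)
lemma O_mult: "x \<in> VR \<Longrightarrow> y \<in> VR \<Longrightarrow> x * y \<in> VR"
  unfolding val_ring_def using vmult[of x y] by (cases "x = 0"; cases "y = 0"; auto)
lemma M_mult: "x \<in> VR \<Longrightarrow> y \<in> VM \<Longrightarrow> x * y \<in> VM"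
  unfolding val_ring_def val_max_ideal_def using vmult[of x y]
  by (cases "x = 0"; cases "y = 0"; auto simp: add_nonneg_pos)
lemma M_mult_iff: "x \<in> VR \<Longrightarrow> y \<in> VR \<Longrightarrow> x * y \<in> VM \<longleftrightarrow> x \<in> VM \<or> y \<in> VM"
proof -
  assume a: "x \<in> VR" "y \<in> VR"
  show ?thesis
  proof
    assume "x * y \<in> VM"
    then show "x \<in> VM \<or> y \<in> VM"
    proof (cases "x = 0 \<or> y = 0")
      case True then show ?thesis by auto
    next
      case False
      then have xy: "x * y \<noteq> 0" "\<nu> (x*y) = \<nu> x + \<nu> y" using vmult by auto
      have "0 < \<nu> x + \<nu> y" using \<open>x * y \<in> VM\<close> xy unfolding val_max_ideal_def by auto
      moreover have "0 \<le> \<nu> x" "0 \<le> \<nu> y" using a False unfolding val_ring_def by auto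
      ultimately have "0 < \<nu> x \<or> 0 < \<nu> y"
        by (metis add.right_neutral antisym_conv1 less_irrefl)
      then show ?thesis unfolding val_max_ideal_def by auto
    qed
  next
    assume "x \<in> VM \<or> y \<in> VM" then show "x*y \<in> VM" using a M_mult by (metis mult.commute)
  qed
qed
lemma unit_div_O: "x \<in> VR \<Longrightarrow> c \<in> VR \<Longrightarrow> c \<notin> VM \<Longrightarrow> x / c \<in> VR"
  unfolding val_ring_def val_max_ideal_def using vmult[of x "inverse c"] vinv[of c]
  by (cases "x = 0"; cases "c = 0"; auto simp: divide_inverse)
lemma unit_div_notM: "x \<in> VR \<Longrightarrow> x \<notin> VM \<Longrightarrow> c \<in> VR \<Longrightarrow> c \<notin> VM \<Longrightarrow> x / c \<notin> VM"
  unfolding val_ring_def val_max_ideal_def using vmult[of x "inverse c"] vinv[of c]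
  by (cases "x = 0"; cases "c = 0"; auto simp: divide_inverse)
lemma M_add_iff: "u \<in> VM \<Longrightarrow> w \<in> VR \<Longrightarrow> u + w \<in> VM \<longleftrightarrow> w \<in> VM"
  using M_add M_diff by (metis add_diff_cancel_left')
lemma one_minus_M: "a \<in> VR \<Longrightarrow> 1 - a \<in> VM \<Longrightarrow> a \<notin> VM"
  using M_add by fastforce


lemma step1:
  assumes X: "convex2_val \<nu> X"
    and IH: "\<forall>x \<alpha>. (\<forall>j<Suc k. x j \<in> X \<and> \<alpha> j \<in> VR) \<longrightarrow> (\<Sum>j<Suc k. \<alpha> j) = 1 \<longrightarrow> (\<lambda>i. \<Sum>j<Suc k. \<alpha> j * x j i) \<in> X"
    and h: "\<forall>j<Suc (Suc k). x j \<in> X \<and> \<alpha> j \<in> VR" "(\<Sum>j<Suc (Suc k). \<alpha> j) = 1"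
    and u: "1 - \<alpha> (Suc k) \<notin> VM"
  shows "(\<lambda>i. \<Sum>j<Suc (Suc k). \<alpha> j * x j i) \<in> X"
proof -
  define c where "c = 1 - \<alpha> (Suc k)"
  have c0: "c \<noteq> 0" using u c_def M_0 by metis
  have aO: "\<alpha> (Suc k) \<in> VR" using h by simp
  have cO: "c \<in> VR" unfolding c_def using aO O_diff O_1 by blast
  have cM: "c \<notin> VM" using u c_def by simp
  define \<beta> where "\<beta> j = \<alpha> j / c" for j
  have s1: "(\<Sum>j<Suc k. \<alpha> j) = c" using h(2) unfolding c_def by (simp add: algebra_simps)
  have "(\<Sum>j<Suc k. \<beta> j) = (\<Sum>j<Suc k. \<alpha> j) / c" unfolding \<beta>_def by (simp only: sum_divide_distrib)
  also have "\<dots> = 1" using s1 c0 by simp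
  finally have sb: "(\<Sum>j<Suc k. \<beta> j) = 1" .
  have bO: "\<forall>j<Suc k. x j \<in> X \<and> \<beta> j \<in> VR" using h(1) unit_div_O[OF _ cO cM] unfolding \<beta>_def by simp
  define z where "z = (\<lambda>i. \<Sum>j<Suc k. \<beta> j * x j i)"
  have zX: "z \<in> X" using IH bO sb unfolding z_def by blast
  have xX: "x (Suc k) \<in> X" using h by simp
  have ca: "c + \<alpha> (Suc k) = 1" unfolding c_def by simp
  have "(\<lambda>i. c * z i + \<alpha> (Suc k) * x (Suc k) i) \<in> X"
    using X zX xX cO aO ca unfolding convex2_val_def by blast
  moreover have "(\<lambda>i. c * z i + \<alpha> (Suc k) * x (Suc k) i) = (\<lambda>i. \<Sum>j<Suc (Suc k). \<alpha> j * x j i)"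
  proof
    fix i
    have "c * z i = (\<Sum>j<Suc k. \<alpha> j * x j i)"
      unfolding z_def \<beta>_def sum_distrib_left using c0 by (intro sum.cong) simp_all
    then show "c * z i + \<alpha> (Suc k) * x (Suc k) i = (\<Sum>j<Suc (Suc k). \<alpha> j * x j i)" by simp
  qed
  ultimately show ?thesis by simp
qed

lemma conv_ind:
  assumes X: "convex2_val \<nu> X" and l: "l \<in> VR" "l \<notin> VM" "1 - l \<notin> VM"
  shows "\<forall>x \<alpha>. (\<forall>j<Suc n. x j \<in> X \<and> \<alpha> j \<in> VR) \<longrightarrow> (\<Sum>j<Suc n. \<alpha> j) = 1 \<longrightarrow> (\<lambda>i. \<Sum>j<Suc n. \<alpha> j * x j i) \<in> X"
proof (induction n)
  case 0
  then show ?case by simp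
next
  case (Suc k)
  show ?case
  proof (intro allI impI)
    fix x \<alpha>
    assume h: "\<forall>j<Suc (Suc k). x j \<in> X \<and> \<alpha> j \<in> VR" "(\<Sum>j<Suc (Suc k). \<alpha> j) = 1"
    show "(\<lambda>i. \<Sum>j<Suc (Suc k). \<alpha> j * x j i) \<in> X"
    proof (cases "1 - \<alpha> (Suc k) \<in> VM")
      case False
      then show ?thesis using step1[OF X Suc.IH h] by blast
    next
      case True
      define a where "a = \<alpha> (Suc k)"
      have aO: "a \<in> VR" using h a_def by simp
      have l0: "l \<noteq> 0" using l M_0 by metis
      define \<gamma> where "\<gamma> = a / l"
      define y where "y = (\<lambda>i. l * x (Suc k) i + (1 - l) * x k i)"
      have xk: "x (Suc k) \<in> X" "x k \<in> X" using h(1) by auto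
      have l1: "l + (1 - l) = 1" by simp
      have yX: "y \<in> X" using X xk l(1) O_diff[OF O_1 l(1)] l1 unfolding convex2_val_def y_def
        by blast
      define x' where "x' = x(Suc k := y)"
      define \<alpha>' where "\<alpha>' = \<alpha>(k := \<alpha> k - \<gamma> * (1 - l), Suc k := \<gamma>)"
      have gO: "\<gamma> \<in> VR" unfolding \<gamma>_def using unit_div_O[OF aO l(1,2)] .
      have "l - a \<notin> VM"
      proof
        assume "l - a \<in> VM"
        then have "(l - a) - (1 - a) \<in> VM" using True a_def M_diff by blast
        then have "l - 1 \<in> VM" by (simp add: algebra_simps)
        then have "-(l - 1) \<in> VM" by (rule M_uminus)
        then have "1 - l \<in> VM" by (metis minus_diff_eq)
        then show False using l(3) by simp
      qed
      then have "(l - a) / l \<notin> VM" using unit_div_notM[OF O_diff[OF l(1) aO] _ l(1,2)] by blast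
      moreover have "(l - a) / l = 1 - \<gamma>" unfolding \<gamma>_def using l0 by (simp add: field_simps)
      ultimately have g1: "1 - \<alpha>' (Suc k) \<notin> VM" unfolding \<alpha>'_def by simp
      have h1: "\<forall>j<Suc (Suc k). x' j \<in> X \<and> \<alpha>' j \<in> VR"
      proof (intro allI impI)
        fix j assume j: "j < Suc (Suc k)"
        have "x' j \<in> X" unfolding x'_def using h(1) j yX by simp
        moreover have "\<alpha>' j \<in> VR"
        proof -
          consider "j = Suc k" | "j = k" | "j < k" using j by linarith
          then show ?thesis
          proof cases
            case 1 then show ?thesis unfolding \<alpha>'_def using gO by simp
          next
            case 2 then show ?thesis unfolding \<alpha>'_def using h(1)
                O_diff[OF _ O_mult[OF gO O_diff[OF O_1 l(1)]]] by simp
          next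
            case 3 then show ?thesis unfolding \<alpha>'_def using h(1) by simp
          qed
        qed
        ultimately show "x' j \<in> X \<and> \<alpha>' j \<in> VR" by blast
      qed
      have sk: "(\<Sum>j<k. \<alpha>' j) = (\<Sum>j<k. \<alpha> j)" unfolding \<alpha>'_def by (intro sum.cong) auto
      have gl: "\<gamma> * l = a" unfolding \<gamma>_def using l0 by simp
      have "(\<Sum>j<Suc (Suc k). \<alpha>' j) = (\<Sum>j<k. \<alpha> j) + (\<alpha> k - \<gamma> * (1 - l)) + \<gamma>"
        using sk unfolding \<alpha>'_def by simp
      also have "\<dots> = (\<Sum>j<k. \<alpha> j) + \<alpha> k + \<gamma> * l" by (simp add: algebra_simps)
      also have "\<dots> = (\<Sum>j<Suc (Suc k). \<alpha> j)" using gl a_def by simp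
      finally have h2: "(\<Sum>j<Suc (Suc k). \<alpha>' j) = 1" using h(2) by simp
      have "(\<lambda>i. \<Sum>j<Suc (Suc k). \<alpha>' j * x' j i) \<in> X" using step1[OF X Suc.IH h1 h2 g1] .
      moreover have "(\<lambda>i. \<Sum>j<Suc (Suc k). \<alpha>' j * x' j i) = (\<lambda>i. \<Sum>j<Suc (Suc k). \<alpha> j * x j i)"
      proof
        fix i
        have sk': "(\<Sum>j<k. \<alpha>' j * x' j i) = (\<Sum>j<k. \<alpha> j * x j i)" unfolding \<alpha>'_def x'_def by (intro sum.cong) simp_all
        have "(\<Sum>j<Suc (Suc k). \<alpha>' j * x' j i) = (\<Sum>j<k. \<alpha> j * x j i) + (\<alpha> k - \<gamma> * (1 - l)) * x k i + \<gamma> * y i"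
          using sk' unfolding \<alpha>'_def x'_def by simp
        also have "\<dots> = (\<Sum>j<k. \<alpha> j * x j i) + \<alpha> k * x k i + (\<gamma> * l) * x (Suc k) i"
          unfolding y_def by (simp add: algebra_simps)
        also have "\<dots> = (\<Sum>j<Suc (Suc k). \<alpha> j * x j i)" using gl a_def by simp
        finally show "(\<Sum>j<Suc (Suc k). \<alpha>' j * x' j i) = (\<Sum>j<Suc (Suc k). \<alpha> j * x j i)" .
      qed
      ultimately show ?thesis by simp
    qed
  qed
qed

lemma partD:
  assumes l: "l \<in> VR" "l \<notin> VM" "1 - l \<notin> VM"
  shows "convex2_val \<nu> X \<Longrightarrow> convex_val \<nu> X"
  unfolding convex_val_def
proof (intro allI impI)
  fix n x \<alpha> assume X: "convex2_val \<nu> X" and n: "1 \<le> (n::nat)"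
    and h: "\<forall>j<n. x j \<in> X \<and> \<alpha> j \<in> VR" "(\<Sum>j<n. \<alpha> j) = 1"
  obtain m where m: "n = Suc m" using n by (cases n) auto
  have "\<forall>j<Suc m. x j \<in> X \<and> \<alpha> j \<in> VR" "(\<Sum>j<Suc m. \<alpha> j) = 1" using h m by auto
  then have "(\<lambda>i. \<Sum>j<Suc m. \<alpha> j * x j i) \<in> X" using conv_ind[OF X l, of m] by blast
  then show "(\<lambda>i. \<Sum>j<n. \<alpha> j * x j i) \<in> X" using m by simp
qed


lemma add_iff_R2:
  assumes R2: "\<forall>a\<in>VR. a \<in> VM \<or> 1 - a \<in> VM" and x: "x \<in> VR" and y: "y \<in> VR"
  shows "x + y \<in> VM \<longleftrightarrow> (x \<in> VM \<longleftrightarrow> y \<in> VM)"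
proof (cases "x \<in> VM")
  case True
  then show ?thesis using M_add_iff[OF True y] by simp
next
  case xn: False
  show ?thesis
  proof (cases "y \<in> VM")
    case True
    then show ?thesis using M_add_iff[OF True x] xn by (simp add: add.commute)
  next
    case yn: False
    have 1: "1 - x \<in> VM" "1 - y \<in> VM" using R2 x y xn yn by auto
    have "(2::'a) \<in> VR" using O_add[OF O_1 O_1] by (simp add: one_add_one)
    then have "2 \<in> VM \<or> 1 - 2 \<in> VM" using R2 by blast
    moreover have "(1 - 2 :: 'a) \<notin> VM"
    proof
      assume "(1 - 2 :: 'a) \<in> VM"
      then have "- (1 - 2 :: 'a) \<in> VM" by (rule M_uminus)
      then show False by simp
    qed
    ultimately have 2: "(2::'a) \<in> VM" by blast
    have "2 - (1 - x) - (1 - y) \<in> VM" using M_diff[OF M_diff[OF 2 1(1)] 1(2)] .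
    then have "x + y \<in> VM" by (simp add: algebra_simps)
    then show ?thesis using xn yn by simp
  qed
qed

lemma carrier_rf: "carrier (residue_field \<nu>) = {(\<lambda>i. i + a) ` VM | a. a \<in> VR}"
  unfolding residue_field_def FactRing_def A_RCOSETS_defs val_ring_alg_def r_coset_def
  by (auto simp: UNION_singleton_eq_range)


lemma iso_R2:
  assumes iso: "residue_field \<nu> \<simeq> residue_ring 2"
  shows "\<forall>a\<in>VR. a \<in> VM \<or> 1 - a \<in> VM"
proof
  fix a assume a: "a \<in> VR"
  define C where "C b = (\<lambda>i. i + b) ` VM" for b
  have card: "card (carrier (residue_field \<nu>)) = 2"
    using ring_iso_same_card[OF iso] by (simp add: residue_ring_def)
  have carr: "carrier (residue_field \<nu>) = {C b | b. b \<in> VR}" using carrier_rf unfolding C_def .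
  have fin: "finite (carrier (residue_field \<nu>))" using card by (metis card.infinite zero_neq_numeral)
  have C0: "C 0 = VM" unfolding C_def by simp
  have inC: "b \<in> C b" for b unfolding C_def by (rule image_eqI[of _ _ 0]) simp_all
  have C1: "C 1 \<noteq> C 0" unfolding C0
  proof
    assume "C 1 = VM"
    moreover have "1 \<in> C 1" by (rule inC)
    ultimately show False by simp
  qed
  have "C a = C 0 \<or> C a = C 1"
  proof (rule ccontr)
    assume n: "\<not> (C a = C 0 \<or> C a = C 1)"
    have Cc: "C b \<in> carrier (residue_field \<nu>)" if "b \<in> VR" for b unfolding carr using that by blast
    have sub: "{C 0, C 1, C a} \<subseteq> carrier (residue_field \<nu>)" using Cc[OF O_0] Cc[OF O_1] Cc[OF a] by simp
    have "card {C 0, C 1, C a} = 3" using n C1 by (simp add: card_insert_if) (metis)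
    then have "3 \<le> card (carrier (residue_field \<nu>))" using card_mono[OF fin sub] by simp
    then show False using card by simp
  qed
  then show "a \<in> VM \<or> 1 - a \<in> VM"
  proof
    assume "C a = C 0" then show ?thesis using inC[of a] C0 by simp
  next
    assume "C a = C 1"
    then have "a \<in> C 1" using inC[of a] by simp
    then obtain i where i: "i \<in> VM" "a = i + 1" unfolding C_def by auto
    then have "1 - a = - i" by simp
    then show ?thesis using M_uminus[OF i(1)] by simp
  qed
qed

lemma ring_VR: "ring (val_ring_alg \<nu>)"
proof (rule ringI)
  show "abelian_group (val_ring_alg \<nu>)"
  proof (rule abelian_groupI)
    fix x assume "x \<in> carrier (val_ring_alg \<nu>)"
    then have "-x \<in> carrier (val_ring_alg \<nu>)" "-x \<oplus>\<^bsub>val_ring_alg \<nu>\<^esub> x = \<zero>\<^bsub>val_ring_alg \<nu>\<^esub>"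
      unfolding val_ring_alg_def using O_uminus by auto
    then show "\<exists>y\<in>carrier (val_ring_alg \<nu>). y \<oplus>\<^bsub>val_ring_alg \<nu>\<^esub> x = \<zero>\<^bsub>val_ring_alg \<nu>\<^esub>" by blast
  qed (auto simp: val_ring_alg_def O_add)
  show "monoid (val_ring_alg \<nu>)"
    by (rule monoidI) (auto simp: val_ring_alg_def O_mult)
qed (auto simp: val_ring_alg_def algebra_simps)

lemma R2_iso:
  assumes R2: "\<forall>a\<in>VR. a \<in> VM \<or> 1 - a \<in> VM"
  shows "residue_field \<nu> \<simeq> residue_ring 2"
proof -
  interpret r2: residues 2 "residue_ring 2" by unfold_locales simp
  define h where "h a = (if a \<in> VM then 0 else 1::int)" for a
  have hom: "h \<in> ring_hom (val_ring_alg \<nu>) (residue_ring 2)"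
  proof (rule ring_hom_memI)
    fix x assume "x \<in> carrier (val_ring_alg \<nu>)"
    show "h x \<in> carrier (residue_ring 2)" unfolding h_def residue_ring_def by simp
  next
    fix x y assume "x \<in> carrier (val_ring_alg \<nu>)" "y \<in> carrier (val_ring_alg \<nu>)"
    then have xy: "x \<in> VR" "y \<in> VR" unfolding val_ring_alg_def by simp_all
    show "h (x \<otimes>\<^bsub>val_ring_alg \<nu>\<^esub> y) = h x \<otimes>\<^bsub>residue_ring 2\<^esub> h y"
      unfolding h_def residue_ring_def val_ring_alg_def using M_mult_iff[OF xy] by simp
    show "h (x \<oplus>\<^bsub>val_ring_alg \<nu>\<^esub> y) = h x \<oplus>\<^bsub>residue_ring 2\<^esub> h y"
      unfolding h_def residue_ring_def val_ring_alg_def using add_iff_R2[OF R2 xy] by simp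
  next
    show "h \<one>\<^bsub>val_ring_alg \<nu>\<^esub> = \<one>\<^bsub>residue_ring 2\<^esub>"
      unfolding h_def residue_ring_def val_ring_alg_def by simp
  qed
  interpret hr: ring_hom_ring "val_ring_alg \<nu>" "residue_ring 2" h
    by (rule ring_hom_ringI2[OF ring_VR r2.cring[THEN cring.axioms(1)] hom])
  have surj: "h ` carrier (val_ring_alg \<nu>) = carrier (residue_ring 2)"
  proof
    show "h ` carrier (val_ring_alg \<nu>) \<subseteq> carrier (residue_ring 2)"
      unfolding h_def residue_ring_def by auto
    have "h 0 = 0" "h 1 = 1" unfolding h_def by auto
    then have "{0, 1} \<subseteq> h ` carrier (val_ring_alg \<nu>)" unfolding val_ring_alg_def
      by (metis O_0 O_1 empty_subsetI image_eqI insert_subset partial_object.select_convs(1))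
    moreover have "carrier (residue_ring 2) = {0, 1::int}" unfolding residue_ring_def by auto
    ultimately show "carrier (residue_ring 2) \<subseteq> h ` carrier (val_ring_alg \<nu>)" by simp
  qed
  have ker: "a_kernel (val_ring_alg \<nu>) (residue_ring 2) h = VM"
    unfolding a_kernel_def kernel_def h_def residue_ring_def val_ring_alg_def using M_O by auto
  show ?thesis using hr.FactRing_iso[OF surj] unfolding ker residue_field_def .
qed

lemma partC:
  assumes R2: "\<forall>a\<in>VR. a \<in> VM \<or> 1 - a \<in> VM"
  shows "\<not> (\<forall>d::nat. d \<ge> 1 \<longrightarrow> (\<forall>X. X \<subseteq> Kpow d \<longrightarrow> convex2_val \<nu> X \<longrightarrow> convex_val \<nu> X))"
proof
  assume P: "\<forall>d::nat. d \<ge> 1 \<longrightarrow> (\<forall>X. X \<subseteq> Kpow d \<longrightarrow> convex2_val \<nu> X \<longrightarrow> convex_val \<nu> X)"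
  define X where "X = {x. x \<in> Kpow 2 \<and> x 0 \<in> VR \<and> x 1 \<in> VR \<and> (x 0 \<in> VM \<or> x 1 \<in> VM)}"
  have comb: "(\<lambda>i. a * x i + b * y i) \<in> X"
    if a: "a \<in> VM" and b: "b \<in> VR" "b \<notin> VM" and x: "x \<in> X" and y: "y \<in> X" for a b x y
  proof -
    have aO: "a \<in> VR" using a M_O by blast
    have i: "a * x i + b * y i \<in> VR \<and> (a * x i + b * y i \<in> VM \<longleftrightarrow> y i \<in> VM)"
      if "i = 0 \<or> i = 1" for i
    proof -
      have xi: "x i \<in> VR" "y i \<in> VR" using x y that unfolding X_def by auto
      have u: "a * x i \<in> VM" using M_mult[OF xi(1) a] by (simp add: mult.commute)
      have w: "b * y i \<in> VR" using O_mult[OF b(1) xi(2)] .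
      show ?thesis using M_add_iff[OF u w] M_mult_iff[OF b(1) xi(2)] b(2) O_add[OF M_O[OF u] w] by simp
    qed
    have "(\<lambda>i. a * x i + b * y i) \<in> Kpow 2" using x y unfolding X_def Kpow_def by auto
    then show ?thesis using i[of 0] i[of 1] y unfolding X_def by auto
  qed
  have c2: "convex2_val \<nu> X" unfolding convex2_val_def
  proof (intro ballI impI)
    fix x y a b assume xy: "x \<in> X" "y \<in> X" and ab: "a \<in> VR" "b \<in> VR" "a + b = 1"
    have "a \<in> VM \<or> b \<in> VM" using R2 ab by (metis add_diff_cancel_left')
    then show "(\<lambda>i. a * x i + b * y i) \<in> X"
    proof
      assume aM: "a \<in> VM"
      have "b \<notin> VM" using aM ab M_add one_notin_M by metis
      then show ?thesis using comb[OF aM ab(2) _ xy] by blast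
    next
      assume bM: "b \<in> VM"
      have "a \<notin> VM" using bM ab M_add one_notin_M by metis
      then have "(\<lambda>i. b * y i + a * x i) \<in> X" using comb[OF bM ab(1) _ xy(2) xy(1)] by blast
      then show ?thesis by (simp add: add.commute)
    qed
  qed
  have sub: "X \<subseteq> Kpow 2" unfolding X_def by auto
  have "(2::nat) \<ge> 1" by simp
  then have cv: "convex_val \<nu> X" using P sub c2 by blast
  define e where "e k = (\<lambda>i::nat. if i = k then (1::'a) else 0)" for k :: nat
  define x where "x j = (if j = 0 then e 0 else if j = 1 then e 1 else (\<lambda>i. 0))" for j :: nat
  define \<alpha> where "\<alpha> j = (if j = 2 then (-1::'a) else 1)" for j :: nat
  have xX: "\<forall>j<3. x j \<in> X \<and> \<alpha> j \<in> VR"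
    unfolding x_def \<alpha>_def e_def X_def Kpow_def using O_uminus[OF O_1] by auto
  have s: "(\<Sum>j<3. \<alpha> j) = 1" unfolding \<alpha>_def by (simp add: numeral_3_eq_3)
  have "(\<lambda>i. \<Sum>j<3. \<alpha> j * x j i) \<in> X" using cv xX s unfolding convex_val_def by auto
  moreover have "(\<lambda>i. \<Sum>j<3. \<alpha> j * x j i) 0 = 1" "(\<lambda>i. \<Sum>j<3. \<alpha> j * x j i) 1 = 1"
    unfolding x_def \<alpha>_def e_def by (simp_all add: numeral_3_eq_3)
  ultimately show False unfolding X_def by auto
qed

end

theorem proposition2p6:
  fixes \<nu> :: "'a::field \<Rightarrow> 'g::linordered_ab_group_add"
  assumes "valuation \<nu>"
  shows "(\<forall>d::nat. d \<ge> 1 \<longrightarrow> (\<forall>X. X \<subseteq> Kpow d \<longrightarrow> convex2_val \<nu> X \<longrightarrow> convex_val \<nu> X))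
         \<longleftrightarrow> \<not> (residue_field \<nu> \<simeq> residue_ring 2)"
proof
  assume P: "\<forall>d::nat. d \<ge> 1 \<longrightarrow> (\<forall>X. X \<subseteq> Kpow d \<longrightarrow> convex2_val \<nu> X \<longrightarrow> convex_val \<nu> X)"
  show "\<not> (residue_field \<nu> \<simeq> residue_ring 2)"
    using P partC[OF assms iso_R2[OF assms]] by blast
next
  assume n: "\<not> (residue_field \<nu> \<simeq> residue_ring 2)"
  then have "\<not> (\<forall>a\<in>val_ring \<nu>. a \<in> val_max_ideal \<nu> \<or> 1 - a \<in> val_max_ideal \<nu>)"
    using R2_iso[OF assms] by blast
  then obtain l where l: "l \<in> val_ring \<nu>" "l \<notin> val_max_ideal \<nu>" "1 - l \<notin> val_max_ideal \<nu>" by blast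
  show "\<forall>d::nat. d \<ge> 1 \<longrightarrow> (\<forall>X. X \<subseteq> Kpow d \<longrightarrow> convex2_val \<nu> X \<longrightarrow> convex_val \<nu> X)"
    using partD[OF assms l] by blast
qed

end
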